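(* Let $r_0\approx 0.546302$ be the positive root of $r^2+2\cot(1)\,r-1=0$, and let $\alpha_1,\alpha_2>0$ satisfy $\alpha_1-\alpha_2\ge e\,r_0$. Let $p$ be analytic in $\mathbb{D}$ with $p(0)=1$. If $$1+\alpha_1 zp'(z)+\alpha_2 z^2p''(z)\prec \frac{2}{1+e^{-z}},$$ then $p(z)\prec e^z$.
   Context: $\mathbb{D}$ is the open unit disk. For $g,h$ analytic in $\mathbb{D}$, $g\prec h$ means there is an analytic $w:\mathbb{D}\to\mathbb{D}$ with $w(0)=0$ and $g=h\circ w$. *)

theory Defs
  imports "HOL-Complex_Analysis.Complex_Analysis"
begin

definition subordinate :: "(complex \<Rightarrow> complex) \<Rightarrow> (complex \<Rightarrow> complex) \<Rightarrow> bool" where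
  "subordinate g h \<longleftrightarrow>
     (\<exists>w. w holomorphic_on ball 0 1 \<and> w ` ball 0 1 \<subseteq> ball 0 1 \<and> w 0 = 0 \<and>
          (\<forall>z\<in>ball 0 1. g z = h (w z)))"

end

theory Submission
  imports Defs
begin


lemma sin1_ge: "sin (1::real) \<ge> 5/6"
proof -
  have "\<bar>sin (1::real) - (\<Sum>m<3. sin_coeff m * 1 ^ m)\<bar> \<le> inverse (fact 3) * \<bar>1\<bar> ^ 3"
    by (rule Maclaurin_sin_bound)
  then show ?thesis by (simp add: eval_nat_numeral sin_coeff_def fact_numeral)
qed

lemma cos1_le: "cos (1::real) \<le> 13/24"
proof -
  obtain t :: real where "cos 1 = (\<Sum>m<4. cos_coeff m * 1 ^ m) + (cos (t + 1/2 * real 4 * pi) / fact 4) * 1 ^ 4"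
    using Maclaurin_cos_expansion[of "1::real" 4] by blast
  moreover have "cos (t + 1/2 * real 4 * pi) \<le> 1" by simp
  moreover have "(\<Sum>m<4. cos_coeff m * (1::real) ^ m) = 1/2"
    by (simp add: lessThan_nat_numeral cos_coeff_def fact_numeral)
  ultimately show ?thesis by (simp add: fact_numeral) (use cos_le_one[of t] in linarith)
qed

lemma cot1_le: "cot (1::real) \<le> 3/4"
proof -
  have "sin (1::real) > 0" using sin1_ge by linarith
  then show ?thesis using sin1_ge cos1_le by (simp add: cot_def divide_simps)
qed

lemma exp1_ge: "exp (1::real) \<ge> 13/5"
proof -
  have "1 + 1/2 + (1/2)\<^sup>2/2 \<le> exp (1/2::real)" by (rule exp_lower_Taylor_quadratic) simp
  then have h: "13/8 \<le> exp (1/2::real)" by (simp add: power2_eq_square)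
  have "exp (1::real) = exp (1/2) * exp (1/2)" by (simp flip: exp_add)
  also have "\<dots> \<ge> 13/8 * (13/8)" using h by (intro mult_mono) auto
  finally show ?thesis by simp
qed

lemma tanh_bound:
  fixes u :: complex assumes u: "norm u < 1"
  shows "1 + exp (-u) \<noteq> 0" "norm (2 / (1 + exp (-u)) - 1) < 4/5"
proof -
  define v where "v = -u"
  define a where "a = Re v"
  define b where "b = Im v"
  have nv: "norm v < 1" using u by (simp add: v_def)
  have ab: "\<bar>a\<bar> < 1" "\<bar>b\<bar> < 1" using nv abs_Re_le_cmod[of v] abs_Im_le_cmod[of v]
    by (auto simp: a_def b_def)
  define E where "E = exp v"
  define ea where "ea = exp a"
  have ReE: "Re E = ea * cos b" and ImE: "Im E = ea * sin b"
    by (simp_all add: E_def ea_def a_def b_def Re_exp Im_exp)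
  have cb: "cos b \<ge> 1/2"
  proof -
    have "cos b = 1 - 2 * (sin (b/2))^2" using cos_double_sin[of "b/2"] by simp
    moreover have "\<bar>sin (b/2)\<bar> \<le> \<bar>b/2\<bar>" by (rule abs_sin_x_le_abs_x)
    then have "(sin (b/2))^2 \<le> (b/2)^2" by (metis abs_ge_zero power2_abs power_mono)
    moreover have "(b/2)^2 \<le> 1/4" using ab(2)
    proof -
      have "\<bar>b\<bar>^2 \<le> 1^2" using ab(2) by (intro power_mono) auto
      then show ?thesis by (simp add: power_divide)
    qed
    ultimately show ?thesis by linarith
  qed
  have ea_le: "ea \<le> 3"
  proof -
    have "ea \<le> exp 1" unfolding ea_def using ab(1) by simp
    then show ?thesis using exp_le by linarith
  qed
  have ea_ge: "ea \<ge> 1/3"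
  proof -
    have "exp (-1) \<le> ea" unfolding ea_def using ab(1) by simp
    moreover have "exp (-1::real) = 1 / exp 1" by (simp add: exp_minus field_simps)
    moreover have "1 / exp (1::real) \<ge> 1/3" using exp_le by (simp add: field_simps)
    ultimately show ?thesis by linarith
  qed
  have n1: "(norm (1 + E))^2 = 1 + 2 * ea * cos b + ea^2"
  proof -
    have "(norm (1 + E))^2 = (1 + ea * cos b)^2 + (ea * sin b)^2"
      by (simp add: cmod_power2 ReE ImE)
    also have "\<dots> = 1 + 2 * ea * cos b + ea^2"
      using sin_cos_squared_add[of b] by algebra
    finally show ?thesis .
  qed
  have n2: "(norm (1 - E))^2 = 1 - 2 * ea * cos b + ea^2"
  proof -
    have "(norm (1 - E))^2 = (1 - ea * cos b)^2 + (ea * sin b)^2"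
      by (simp add: cmod_power2 ReE ImE)
    also have "\<dots> = 1 - 2 * ea * cos b + ea^2"
      using sin_cos_squared_add[of b] by algebra
    finally show ?thesis .
  qed
  have key: "9 + 9 * ea^2 < 82 * ea * cos b"
  proof -
    have "(3*ea - 1) * (ea - 3) \<le> 0" using ea_le ea_ge by (intro mult_nonneg_nonpos) auto
    moreover have "(3*ea - 1) * (ea - 3) = 3*ea^2 - 10*ea + 3" by algebra
    ultimately have "9 + 9 * ea^2 \<le> 30 * ea" by linarith
    moreover have "41 * ea \<le> 82 * ea * cos b" using cb ea_ge by simp
    ultimately show ?thesis using ea_ge by linarith
  qed
  have lt: "(norm (1 - E))^2 < (4/5 * norm (1 + E))^2"
    using key unfolding power_mult_distrib n1 n2 by (simp add: power2_eq_square)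
  have pos: "norm (1 + E) > 0"
  proof -
    have "ea * cos b \<ge> 0" using cb ea_ge by simp
    then have "(norm (1 + E))^2 > 0" using n1 zero_le_power2[of ea] by linarith
    then show ?thesis by simp
  qed
  then show ne: "1 + exp (-u) \<noteq> 0" by (simp add: E_def v_def)
  have "norm (1 - E) < 4/5 * norm (1 + E)"
    by (rule power_less_imp_less_base[OF lt]) (use pos in simp)
  moreover have "2 / (1 + E) - 1 = (1 - E) / (1 + E)"
    using ne by (simp add: E_def v_def field_simps)
  ultimately show "norm (2 / (1 + exp (-u)) - 1) < 4/5"
    using pos by (simp add: E_def v_def norm_divide divide_simps)
qed

lemma norm_Ln_le_series:
  fixes z :: complex assumes z: "norm z < 1"
  shows "norm (Ln (1 + z)) \<le> - ln (1 - norm z)"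
proof -
  have sums: "(\<lambda>n. - ((- z) ^ n) / of_nat n) sums Ln (1 + z)"
    by (rule Ln_series') (use z in auto)
  have rs: "(\<lambda>n. - ((norm z) ^ n) / of_nat n) sums ln (1 + - norm z)"
    using ln_series'[of "- norm z"] z by simp
  then have rs': "(\<lambda>n. norm (- ((- z) ^ n) / of_nat n)) sums (- ln (1 - norm z))"
    using sums_minus[OF rs] by (simp add: norm_divide norm_power)
  have "norm (Ln (1 + z)) = norm (\<Sum>n. - ((- z) ^ n) / of_nat n)"
    using sums by (simp add: sums_iff)
  also have "\<dots> \<le> (\<Sum>n. norm (- ((- z) ^ n) / of_nat n))"
    using rs' by (intro summable_norm) (auto simp: sums_iff)
  also have "\<dots> = - ln (1 - norm z)" using rs' by (simp add: sums_iff)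
  finally show ?thesis .
qed



lemma ode_bound_pos:
  fixes g :: "complex \<Rightarrow> complex" and b N :: real and z :: complex
  assumes hol: "g holomorphic_on ball 0 1" and g0: "g 0 = 0" and b: "b > 0"
    and bnd: "\<And>u. u \<in> ball 0 1 \<Longrightarrow> norm (u * deriv g u + of_real b * g u) \<le> N * norm u"
    and z: "z \<in> ball 0 1"
  shows "norm (g z) \<le> N * norm z / (b + 1)"
proof -
  define \<phi> where "\<phi> = (\<lambda>t::real. of_real (t powr b) * g (of_real t * z))"
  define \<phi>' where "\<phi>' = (\<lambda>t::real. of_real (t powr (b-1)) *
        (of_real t * z * deriv g (of_real t * z) + of_real b * g (of_real t * z)))"
  have inb: "of_real t * z \<in> ball 0 1" if "t \<in> {0..1}" for t
  proof -
    have "norm (of_real t * z) = \<bar>t\<bar> * norm z" by (simp add: norm_mult)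
    also have "\<dots> \<le> norm z" using that by (auto intro: mult_left_le_one_le)
    finally show ?thesis using z by auto
  qed
  have contg: "continuous_on (ball 0 1) g" using hol holomorphic_on_imp_continuous_on by blast
  have cont: "continuous_on {0..1} \<phi>"
  proof -
    have c1: "continuous_on {0..1} (\<lambda>x::real. x powr b)"
      by (rule continuous_on_powr') (use b in \<open>auto intro: continuous_intros\<close>)
    have c2: "continuous_on {0..1} (\<lambda>x. g (complex_of_real x * z))"
      by (rule continuous_on_compose2[OF contg]) (auto intro!: continuous_intros inb)
    have c3: "continuous_on {0..1} (\<lambda>x::real. complex_of_real (x powr b))"
      by (rule continuous_on_of_real[OF c1])
    show ?thesis unfolding \<phi>_def by (rule continuous_on_mult[OF c3 c2])
  qed
  have der: "(\<phi> has_vector_derivative \<phi>' t) (at t)" if t: "t \<in> {0<..<1}" for t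
  proof -
    have t0: "t > 0" using t by auto
    have "of_real t * z \<in> ball 0 1" using inb t by auto
    then have dg: "(g has_field_derivative deriv g (of_real t * z)) (at (of_real t * z))"
      using hol by (intro holomorphic_derivI[OF hol]) auto
    have d1: "((\<lambda>t. complex_of_real t * z) has_vector_derivative z) (at t)"
      using has_vector_derivative_real_field[of "\<lambda>w. w * z" z t UNIV]
      by (auto intro!: derivative_eq_intros)
    have d2: "((\<lambda>t. g (complex_of_real t * z)) has_vector_derivative z * deriv g (of_real t * z)) (at t)"
      using field_vector_diff_chain_at[OF d1 dg] by (simp add: o_def)
    have d3: "((\<lambda>t. complex_of_real (t powr b)) has_vector_derivative of_real (b * t powr (b - 1))) (at t)"
      by (rule has_vector_derivative_of_real) (rule has_real_derivative_powr[OF t0])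
    have "(\<phi> has_vector_derivative (of_real (t powr b) * (z * deriv g (of_real t * z)) +
             of_real (b * t powr (b - 1)) * g (of_real t * z))) (at t)"
      unfolding \<phi>_def by (rule has_vector_derivative_mult[OF d3 d2])
    moreover have "t powr b = t powr (b-1) * t" using t0 by (simp add: powr_diff)
    ultimately show ?thesis unfolding \<phi>'_def by (simp add: algebra_simps)
  qed
  have ftc: "(\<phi>' has_integral (\<phi> 1 - \<phi> 0)) {0..1}"
    by (rule fundamental_theorem_of_calculus_interior[OF _ cont der]) auto
  have "\<phi> 1 - \<phi> 0 = g z" using g0 by (simp add: \<phi>_def)
  then have ftc': "(\<phi>' has_integral g z) {0..1}" using ftc by simp
  have pint: "((\<lambda>t. N * norm z * t powr b) has_integral (N * norm z * (1 / (b+1)))) {0..1}"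
    using has_integral_mult_right[OF has_integral_powr_from_0[of b 1]] b by simp
  have "norm (integral {0..1} \<phi>') \<le> integral {0..1} (\<lambda>t. N * norm z * t powr b)"
  proof (rule integral_norm_bound_integral)
    show "\<phi>' integrable_on {0..1}" using ftc' by blast
    show "(\<lambda>t. N * norm z * t powr b) integrable_on {0..1}" using pint by blast
    fix t :: real assume t: "t \<in> {0..1}"
    show "norm (\<phi>' t) \<le> N * norm z * t powr b"
    proof (cases "t = 0")
      case True thus ?thesis by (simp add: \<phi>'_def)
    next
      case False
      then have t0: "t > 0" using t by auto
      have "norm (\<phi>' t) = t powr (b-1) * norm (of_real t * z * deriv g (of_real t * z) + of_real b * g (of_real t * z))"
        by (simp add: \<phi>'_def norm_mult)
      also have "\<dots> \<le> t powr (b-1) * (N * norm (of_real t * z))"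
        by (rule mult_left_mono[OF bnd[OF inb[OF t]]]) simp
      also have "\<dots> = N * norm z * (t powr (b-1) * t)" using t0 by (simp add: norm_mult)
      also have "t powr (b-1) * t = t powr b" using t0 by (simp add: powr_diff)
      finally show ?thesis .
    qed
  qed
  then show ?thesis using integral_unique[OF ftc'] integral_unique[OF pint] by simp
qed

lemma ode_bound_zero:
  fixes g :: "complex \<Rightarrow> complex" and N :: real and z :: complex
  assumes hol: "g holomorphic_on ball 0 1" and g0: "g 0 = 0"
    and bnd: "\<And>u. u \<in> ball 0 1 \<Longrightarrow> norm (u * deriv g u) \<le> N * norm u"
    and z: "z \<in> ball 0 1"
  shows "norm (g z) \<le> N * norm z"
proof -
  define \<phi> where "\<phi> = (\<lambda>t::real. g (of_real t * z))"
  define \<phi>' where "\<phi>' = (\<lambda>t::real. z * deriv g (of_real t * z))"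
  have inb: "of_real t * z \<in> ball 0 1" if "t \<in> {0..1}" for t
  proof -
    have "norm (of_real t * z) = \<bar>t\<bar> * norm z" by (simp add: norm_mult)
    also have "\<dots> \<le> norm z" using that by (auto intro: mult_left_le_one_le)
    finally show ?thesis using z by auto
  qed
  have contg: "continuous_on (ball 0 1) g" using hol holomorphic_on_imp_continuous_on by blast
  have cont: "continuous_on {0..1} \<phi>"
    unfolding \<phi>_def by (rule continuous_on_compose2[OF contg]) (auto intro!: continuous_intros inb)
  have der: "(\<phi> has_vector_derivative \<phi>' t) (at t)" if t: "t \<in> {0<..<1}" for t
  proof -
    have "of_real t * z \<in> ball 0 1" using inb t by auto
    then have dg: "(g has_field_derivative deriv g (of_real t * z)) (at (of_real t * z))"
      using hol by (intro holomorphic_derivI[OF hol]) auto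
    have d1: "((\<lambda>t. complex_of_real t * z) has_vector_derivative z) (at t)"
      using has_vector_derivative_real_field[of "\<lambda>w. w * z" z t UNIV]
      by (auto intro!: derivative_eq_intros)
    show ?thesis
      using field_vector_diff_chain_at[OF d1 dg] by (simp add: o_def \<phi>_def \<phi>'_def)
  qed
  have ftc: "(\<phi>' has_integral (\<phi> 1 - \<phi> 0)) {0..1}"
    by (rule fundamental_theorem_of_calculus_interior[OF _ cont der]) auto
  have "\<phi> 1 - \<phi> 0 = g z" using g0 by (simp add: \<phi>_def)
  then have ftc': "(\<phi>' has_integral g z) {0..1}" using ftc by simp
  show ?thesis
  proof (cases "z = 0")
    case True thus ?thesis using g0 by simp
  next
    case False
    have N0: "0 \<le> N * norm z"
      using bnd[OF z] norm_ge_zero order_trans by blast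
    have "norm (g z) \<le> N * norm z * Henstock_Kurzweil_Integration.content {0..(1::real)}"
    proof (rule has_integral_bound_real[OF N0 _ ftc', of "{0}"])
      fix t :: real assume t: "t \<in> {0..1} - {0}"
      then have t0: "t > 0" by auto
      have "t * norm (\<phi>' t) = norm (of_real t * z * deriv g (of_real t * z))"
        using t0 by (simp add: \<phi>'_def norm_mult)
      also have "\<dots> \<le> N * norm (of_real t * z)" using bnd inb t by auto
      also have "\<dots> = t * (N * norm z)" using t0 by (simp add: norm_mult)
      finally show "norm (\<phi>' t) \<le> N * norm z" using t0 by simp
    qed simp
    then show ?thesis by simp
  qed
qed



lemma r0_ge: fixes r0 :: real assumes "r0 > 0" "r0 ^ 2 + 2 * cot 1 * r0 - 1 = 0" shows "r0 \<ge> 1/2"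
proof (rule ccontr)
  assume "\<not> r0 \<ge> 1/2"
  then have h: "r0 < 1/2" by simp
  have "r0 ^ 2 < 1/4" using power_strict_mono[of r0 "1/2" 2] h assms(1) by (simp add: power_divide)
  moreover have "cot 1 * r0 \<le> 3/4 * r0" using cot1_le assms(1) by (intro mult_right_mono) auto
  ultimately show False using assms h by linarith
qed

theorem theorem4p5:
  fixes p :: "complex \<Rightarrow> complex" and r0 \<alpha>1 \<alpha>2 :: real
  assumes r0_pos: "r0 > 0"
    and r0_root: "r0 ^ 2 + 2 * cot 1 * r0 - 1 = 0"
    and a1: "\<alpha>1 > 0" and a2: "\<alpha>2 > 0"
    and a12: "\<alpha>1 - \<alpha>2 \<ge> exp 1 * r0"
    and hol: "p holomorphic_on ball 0 1"
    and p0: "p 0 = 1"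
    and sub: "subordinate
               (\<lambda>z. 1 + of_real \<alpha>1 * z * deriv p z + of_real \<alpha>2 * z ^ 2 * deriv (deriv p) z)
               (\<lambda>z. 2 / (1 + exp (- z)))"
  shows "subordinate p exp"
proof -
  obtain w where wh: "w holomorphic_on ball 0 1" and wb: "w ` ball 0 1 \<subseteq> ball 0 1"
    and w0: "w 0 = 0"
    and weq: "\<And>z. z \<in> ball 0 1 \<Longrightarrow> 1 + of_real \<alpha>1 * z * deriv p z + of_real \<alpha>2 * z ^ 2 * deriv (deriv p) z
                = 2 / (1 + exp (- w z))"
    using sub unfolding subordinate_def by blast
  have r0h: "r0 \<ge> 1/2" by (rule r0_ge[OF r0_pos r0_root])
  have hp1: "deriv p holomorphic_on ball 0 1" by (rule holomorphic_deriv[OF hol]) auto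
  have hp2: "deriv (deriv p) holomorphic_on ball 0 1" by (rule holomorphic_deriv[OF hp1]) auto
  define H where "H = (\<lambda>z. of_real \<alpha>1 * z * deriv p z + of_real \<alpha>2 * z ^ 2 * deriv (deriv p) z)"
  have Hh: "H holomorphic_on ball 0 1" unfolding H_def using hp1 hp2 hol by (auto intro!: holomorphic_intros)
  have H0: "H 0 = 0" by (simp add: H_def)
  have Hlt: "norm (H z) < 4/5" if z: "z \<in> ball 0 1" for z
  proof -
    have "w z \<in> ball 0 1" using wb z by blast
    then have "norm (w z) < 1" by simp
    moreover have "H z = 2 / (1 + exp (- w z)) - 1" using weq[OF z] unfolding H_def by (simp add: algebra_simps)
    ultimately show ?thesis using tanh_bound(2) by simp
  qed
  have Hle: "norm (H z) \<le> 4/5 * norm z" if z: "z \<in> ball 0 1" for z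
  proof -
    have "norm ((\<lambda>z. 5/4 * H z) z) \<le> norm z"
    proof (rule Schwarz_Lemma(1))
      show "(\<lambda>z. 5/4 * H z) holomorphic_on ball 0 1" using Hh by (intro holomorphic_intros)
      show "5/4 * H 0 = 0" using H0 by simp
      show "norm (5/4 * H u) < 1" if "norm u < 1" for u :: complex
        using Hlt[of u] that by (simp add: norm_mult)
      show "norm z < 1" using z by simp
    qed
    then show ?thesis by (simp add: norm_mult)
  qed
  define \<beta> where "\<beta> = \<alpha>1 / \<alpha>2 - 1"
  have e0: "exp 1 * r0 > 0" using r0_pos by simp
  have \<beta>0: "\<beta> > 0" using a12 e0 a2 by (simp add: \<beta>_def field_simps)
  define f where "f = (\<lambda>z. p z - 1)"
  have fh: "f holomorphic_on ball 0 1" unfolding f_def using hol by (intro holomorphic_intros)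
  have f0: "f 0 = 0" by (simp add: f_def p0)
  have df: "deriv f z = deriv p z" if z: "z \<in> ball 0 1" for z
  proof -
    have "(p has_field_derivative deriv p z) (at z)" using hol z by (intro holomorphic_derivI[OF hol]) auto
    then have "(f has_field_derivative deriv p z) (at z)" unfolding f_def by (auto intro!: derivative_eq_intros)
    then show ?thesis by (rule DERIV_imp_deriv)
  qed
  define v where "v = (\<lambda>z. z * deriv p z + of_real \<beta> * f z)"
  have vh: "v holomorphic_on ball 0 1" unfolding v_def using hp1 fh hol by (auto intro!: holomorphic_intros)
  have v0: "v 0 = 0" by (simp add: v_def f0)
  have dv: "z * deriv v z = H z / of_real \<alpha>2" if z: "z \<in> ball 0 1" for z
  proof -
    have d1: "(p has_field_derivative deriv p z) (at z)" using hol z by (intro holomorphic_derivI[OF hol]) auto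
    have d2: "(deriv p has_field_derivative deriv (deriv p) z) (at z)" using hp1 z by (intro holomorphic_derivI[OF hp1]) auto
    have "(v has_field_derivative (deriv p z + z * deriv (deriv p) z + of_real \<beta> * deriv p z)) (at z)"
      unfolding v_def f_def by (auto intro!: derivative_eq_intros d1 d2)
    then have "deriv v z = deriv p z + z * deriv (deriv p) z + of_real \<beta> * deriv p z" by (rule DERIV_imp_deriv)
    moreover have "of_real \<alpha>1 = of_real \<alpha>2 * (1 + of_real \<beta> :: complex)"
      using a2 by (simp add: \<beta>_def field_simps flip: of_real_mult of_real_add)
    ultimately show ?thesis using a2 by (simp add: H_def field_simps power2_eq_square)
  qed
  have vle: "norm (v z) \<le> 4 / (5 * \<alpha>2) * norm z" if z: "z \<in> ball 0 1" for z
  proof (rule ode_bound_zero[OF vh v0 _ z])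
    fix u :: complex assume u: "u \<in> ball 0 1"
    have "norm (u * deriv v u) = norm (H u) / \<alpha>2" using dv[OF u] a2 by (simp add: norm_divide)
    also have "\<dots> \<le> (4/5 * norm u) / \<alpha>2" by (rule divide_right_mono[OF Hle[OF u]]) (use a2 in simp)
    finally show "norm (u * deriv v u) \<le> 4 / (5 * \<alpha>2) * norm u" by simp
  qed
  have fle: "norm (f z) \<le> 4 / (5 * \<alpha>2) * norm z / (\<beta> + 1)" if z: "z \<in> ball 0 1" for z
  proof (rule ode_bound_pos[OF fh f0 \<beta>0 _ z])
    fix u :: complex assume u: "u \<in> ball 0 1"
    have "u * deriv f u + of_real \<beta> * f u = v u" using df[OF u] by (simp add: v_def)
    then show "norm (u * deriv f u + of_real \<beta> * f u) \<le> 4 / (5 * \<alpha>2) * norm u" using vle[OF u] by simp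
  qed
  have fsmall: "norm (f z) < 8/13" if z: "z \<in> ball 0 1" for z
  proof -
    have "4 / (5 * \<alpha>2) * norm z / (\<beta> + 1) = 4 * norm z / (5 * \<alpha>1)"
      using a1 a2 by (simp add: \<beta>_def field_simps)
    also have "\<dots> \<le> 4 / (5 * \<alpha>1)" using z a1 by (simp add: divide_right_mono)
    also have "\<dots> < 8/13"
    proof -
      have "exp 1 * r0 \<ge> 13/5 * (1/2)" using exp1_ge r0h by (intro mult_mono) auto
      then have "\<alpha>1 > 13/10" using a12 a2 by linarith
      then show ?thesis by (simp add: field_simps)
    qed
    finally show ?thesis using fle[OF z] by linarith
  qed
  define W where "W = (\<lambda>z. Ln (p z))"
  have pz: "p z = 1 + f z" for z by (simp add: f_def)
  have pnot: "p z \<notin> \<real>\<^sub>\<le>\<^sub>0" if z: "z \<in> ball 0 1" for z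
  proof -
    have "Re (f z) \<ge> - norm (f z)" using abs_Re_le_cmod[of "f z"] by linarith
    then have "Re (p z) > 0" using fsmall[OF z] by (simp add: pz)
    then show ?thesis by (simp add: complex_nonpos_Reals_iff)
  qed
  have Wh: "W holomorphic_on ball 0 1" unfolding W_def using pnot hol by (intro holomorphic_on_Ln') auto
  have W0: "W 0 = 0" by (simp add: W_def p0)
  have Wb: "W ` ball 0 1 \<subseteq> ball 0 1"
  proof
    fix y assume "y \<in> W ` ball 0 1"
    then obtain z where z: "z \<in> ball 0 1" and y: "y = W z" by blast
    have fz: "norm (f z) < 8/13" by (rule fsmall[OF z])
    have "norm y \<le> - ln (1 - norm (f z))" unfolding y W_def pz
      by (rule norm_Ln_le_series) (use fz in simp)
    also have "\<dots> < 1"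
    proof -
      have "exp (-1) = 1 / exp (1::real)" by (simp add: exp_minus field_simps)
      also have "\<dots> \<le> 5/13" using exp1_ge by (simp add: field_simps)
      finally have "exp (-1) < 1 - norm (f z)" using fz by linarith
      then have "exp (-1) < exp (ln (1 - norm (f z)))" using fz by simp
      then have "-1 < ln (1 - norm (f z))" by (simp only: exp_less_cancel_iff)
      then show ?thesis by linarith
    qed
    finally show "y \<in> ball 0 1" by simp
  qed
  have Weq: "\<forall>z\<in>ball (0::complex) 1. p z = exp (W z)"
  proof
    fix z :: complex assume z: "z \<in> ball 0 1"
    have "p z \<noteq> 0" using pnot[OF z] by auto
    then show "p z = exp (W z)" by (simp add: W_def)
  qed
  show ?thesis unfolding subordinate_def using Wh Wb W0 Weq by blast
qed

end
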